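(* Let $\phi:\Delta\to\mathbb R$ be continuous, and for each $n$ and each pair of partitions $\lambda,\mu\vdash n$ let $\phi^{(\lambda)}_n(\mu)\in\mathbb R$ be given, such that there is a sequence $\delta_n\to0$ (not depending on $\lambda,\mu$) with $|\phi^{(\lambda)}_n(\mu)-\phi(\mu/n)|\le\delta_n$ for all $n,\lambda,\mu$. If $n\to\infty$ and $\lambda=\lambda^{(n)}\vdash n$ satisfies $\lambda/n\to x\in\Delta$, then \[ \frac1n\log\Big(\sum_{\mu\vdash n,\ \mu\trianglerighteq\lambda}\exp\big(n\,\phi^{(\lambda)}_n(\mu)\big)\Big)\to\max_{y\in\Delta(x)}\phi(y). \]
   Context: Fix $\theta\in\{2,3,\dots\}$. A partition $\lambda\vdash n$ means a vector $(\lambda_1,\dots,\lambda_\theta)$ of nonnegative integers with $\lambda_1\ge\dots\ge\lambda_\theta$ and $\sum\lambda_i=n$ (so $\lambda/n\in\Delta$). $\Delta=\{x\in[0,1]^\theta:x_1\ge\dots\ge x_\theta,\ \sum_i x_i=1\}$. For vectors $x,y$ in $\Delta$ (or partitions), $y\trianglerighteq x$ means $y_1+\dots+y_i\ge x_1+\dots+x_i$ for all $i$, and $\Delta(x)=\{y\in\Delta:y\trianglerighteq x\}$. *)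

theory Defs
  imports "HOL-Analysis.Analysis"
begin

text \<open>Vectors in R^theta are represented as functions nat => real (resp. nat => nat for
partitions) indexed by 0..<theta, and equal to 0 at indices >= theta (so that each vector
has a unique representative). Topology on nat => real is the product topology, which on
vectors supported in {..<theta} agrees with the Euclidean topology of R^theta.\<close>

definition simplexD :: "nat \<Rightarrow> (nat \<Rightarrow> real) set" where
  "simplexD theta = {x. (\<forall>i\<ge>theta. x i = 0) \<and> (\<forall>i<theta. 0 \<le> x i \<and> x i \<le> 1)
      \<and> (\<forall>i j. i \<le> j \<and> j < theta \<longrightarrow> x j \<le> x i) \<and> (\<Sum>i<theta. x i) = 1}"

definition partitions :: "nat \<Rightarrow> nat \<Rightarrow> (nat \<Rightarrow> nat) set" where
  "partitions theta n = {l. (\<forall>i\<ge>theta. l i = 0)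
      \<and> (\<forall>i j. i \<le> j \<and> j < theta \<longrightarrow> l j \<le> l i) \<and> (\<Sum>i<theta. l i) = n}"

definition dominates :: "nat \<Rightarrow> (nat \<Rightarrow> real) \<Rightarrow> (nat \<Rightarrow> real) \<Rightarrow> bool" where
  "dominates theta y x \<longleftrightarrow> (\<forall>k\<le>theta. (\<Sum>i<k. x i) \<le> (\<Sum>i<k. y i))"

definition simplexDom :: "nat \<Rightarrow> (nat \<Rightarrow> real) \<Rightarrow> (nat \<Rightarrow> real) set" where
  "simplexDom theta x = {y \<in> simplexD theta. dominates theta y x}"

definition normalize :: "nat \<Rightarrow> (nat \<Rightarrow> nat) \<Rightarrow> (nat \<Rightarrow> real)" where
  "normalize n l = (\<lambda>i. real (l i) / real n)"

end

theory Submission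
  imports Defs
begin

lemma tendsto_fun_comp:
  fixes f :: "'a \<Rightarrow> nat \<Rightarrow> real"
  assumes "\<And>i. ((\<lambda>c. f c i) \<longlongrightarrow> l i) F"
  shows "(f \<longlongrightarrow> l) F"
proof -
  have "limitin (product_topology (\<lambda>i. euclidean) UNIV) f l F"
    using assms by (simp add: limitin_componentwise)
  then show ?thesis by (simp add: euclidean_product_topology)
qed

lemma cont_psum: "continuous_on S (\<lambda>y::nat\<Rightarrow>real. \<Sum>i<k. y i)"
  by (intro continuous_on_sum) (auto intro: continuous_on_subset[OF continuous_on_product_coordinates])

lemma closed_simplexD: "closed (simplexD theta)"
proof -
  have "simplexD theta = {x. (\<forall>i. theta \<le> i \<longrightarrow> x i = 0) \<and> (\<forall>i. i < theta \<longrightarrow> 0 \<le> x i \<and> x i \<le> 1)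
      \<and> (\<forall>i. \<forall>j. i \<le> j \<and> j < theta \<longrightarrow> x j \<le> x i) \<and> (\<Sum>i<theta. x i) = 1}"
    by (auto simp: simplexD_def)
  also have "closed \<dots>"
    by (intro closed_Collect_conj closed_Collect_all closed_Collect_imp closed_Collect_eq closed_Collect_le
        open_Collect_const closed_Collect_const cont_psum continuous_on_product_coordinates continuous_on_const)
  finally show ?thesis .
qed

lemma compact_simplexD: "compact (simplexD theta)"
proof -
  let ?S = "\<lambda>i::nat. if i < theta then {0..1::real} else {0}"
  have "compactin (product_topology (\<lambda>i. euclidean) UNIV) (PiE UNIV ?S)"
    by (subst compactin_PiE) auto
  then have c: "compact (PiE UNIV ?S)" by (simp add: euclidean_product_topology)
  have "simplexD theta \<subseteq> PiE UNIV ?S"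
    by (auto simp: simplexD_def PiE_def Pi_def extensional_def)
  then show ?thesis using closed_simplexD c compact_Int_closed
    by (metis inf.absorb_iff2 inf_commute)
qed

lemma compact_simplexDom: "compact (simplexDom theta x)"
proof -
  have "simplexDom theta x = simplexD theta \<inter> {y. \<forall>k. k \<le> theta \<longrightarrow> (\<Sum>i<k. x i) \<le> (\<Sum>i<k. y i)}"
    by (auto simp: simplexDom_def dominates_def)
  also have "compact \<dots>"
    by (intro compact_Int_closed compact_simplexD closed_Collect_all closed_Collect_imp open_Collect_const
        closed_Collect_le continuous_on_const cont_psum)
  finally show ?thesis .
qed

lemma tendsto_fun_iff:
  fixes f :: "'a \<Rightarrow> nat \<Rightarrow> real"
  shows "(f \<longlongrightarrow> l) F \<longleftrightarrow> (\<forall>i. ((\<lambda>c. f c i) \<longlongrightarrow> l i) F)"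
proof -
  have "(f \<longlongrightarrow> l) F \<longleftrightarrow> limitin (product_topology (\<lambda>i. euclidean) UNIV) f l F"
    by (simp add: euclidean_product_topology)
  also have "\<dots> \<longleftrightarrow> (\<forall>i. ((\<lambda>c. f c i) \<longlongrightarrow> l i) F)"
    by (simp add: limitin_componentwise)
  finally show ?thesis .
qed

lemma normalize_simplexD:
  assumes "n > 0" "m \<in> partitions theta n"
  shows "normalize n m \<in> simplexD theta"
proof -
  have s: "(\<Sum>i<theta. m i) = n" and z: "\<forall>i\<ge>theta. m i = 0"
    and mono: "\<forall>i j. i \<le> j \<and> j < theta \<longrightarrow> m j \<le> m i"
    using assms(2) by (auto simp: partitions_def)
  have le: "m i \<le> n" if "i < theta" for i
    using member_le_sum[of i "{..<theta}" m] that s by auto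
  have "(\<Sum>i<theta. real (m i) / real n) = real (\<Sum>i<theta. m i) / real n"
    by (simp add: sum_divide_distrib)
  also have "\<dots> = 1" using s assms(1) by simp
  finally have "(\<Sum>i<theta. real (m i) / real n) = 1" .
  then show ?thesis using z mono le assms(1)
    by (auto simp: simplexD_def normalize_def divide_right_mono)
qed

lemma dom_normalize:
  assumes "n > 0" "dominates theta (\<lambda>i. real (m i)) (\<lambda>i. real (l i))"
  shows "dominates theta (normalize n m) (normalize n l)"
  using assms unfolding dominates_def normalize_def
  by (auto simp: sum_divide_distrib[symmetric] divide_right_mono)

lemma psum_le_1:
  assumes "z \<in> simplexD theta" "k \<le> theta"
  shows "(\<Sum>i<k. z i) \<le> 1"
proof -
  have "(\<Sum>i<k. z i) \<le> (\<Sum>i<theta. z i)"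
    using assms by (intro sum_mono2) (auto simp: simplexD_def)
  then show ?thesis using assms by (simp add: simplexD_def)
qed

lemma psum_tendsto:
  assumes "(f \<longlongrightarrow> (l::nat\<Rightarrow>real)) F"
  shows "((\<lambda>c. \<Sum>i<k. f c i) \<longlongrightarrow> (\<Sum>i<k. l i)) F"
  using assms by (intro tendsto_sum) (auto simp: tendsto_fun_iff)

lemma upper_bound:
  fixes phi :: "(nat \<Rightarrow> real) \<Rightarrow> real" and M e :: real
  assumes cont: "continuous_on (simplexD theta) phi"
    and ymax: "\<forall>z\<in>simplexDom theta x. phi z \<le> M"
    and xn: "(\<lambda>n. normalize n (lam n)) \<longlonglongrightarrow> x"
    and e: "e > 0"
  shows "eventually (\<lambda>n. \<forall>m. m \<in> partitions theta n \<longrightarrow>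
      dominates theta (\<lambda>i. real (m i)) (\<lambda>i. real (lam n i)) \<longrightarrow> phi (normalize n m) \<le> M + e) sequentially"
proof -
  define K where "K = simplexD theta \<inter> phi -` {M + e..}"
  have Kc: "compact K" unfolding K_def
  proof -
    have "closed (simplexD theta \<inter> phi -` {M + e..})"
      by (rule continuous_closed_preimage[OF cont closed_simplexD]) (rule closed_atLeast)
    then have "compact (simplexD theta \<inter> (simplexD theta \<inter> phi -` {M + e..}))"
      by (intro compact_Int_closed compact_simplexD)
    then show "compact (simplexD theta \<inter> phi -` {M + e..})" by (simp add: Int_absorb)
  qed
  show ?thesis
  proof (cases "K = {}")
    case True
    have "eventually (\<lambda>n. n > 0) sequentially" by (simp add: eventually_gt_at_top)
    then show ?thesis
    proof (rule eventually_mono, intro allI impI)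
      fix n m assume "n > 0" "m \<in> partitions theta n"
      then have "normalize n m \<in> simplexD theta" by (rule normalize_simplexD)
      then show "phi (normalize n m) \<le> M + e" using True by (force simp: K_def)
    qed
  next
    case False
    define g where "g z = (\<Sum>k\<le>theta. max 0 ((\<Sum>i<k. x i) - (\<Sum>i<k. z i)))" for z :: "nat \<Rightarrow> real"
    have gc: "continuous_on K g" unfolding g_def
      by (intro continuous_intros cont_psum)
    obtain z0 where z0: "z0 \<in> K" "\<And>z. z \<in> K \<Longrightarrow> g z0 \<le> g z"
      using continuous_attains_inf[OF Kc False gc] by blast
    have gpos: "g z > 0" if "z \<in> K" for z
    proof -
      have zD: "z \<in> simplexD theta" and pz: "phi z \<ge> M + e" using that by (auto simp: K_def)
      have "z \<notin> simplexDom theta x" using ymax pz e by force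
      then obtain k where k: "k \<le> theta" "(\<Sum>i<k. z i) < (\<Sum>i<k. x i)"
        using zD by (auto simp: simplexDom_def dominates_def not_le)
      have "0 < max 0 ((\<Sum>i<k. x i) - (\<Sum>i<k. z i))" using k by simp
      also have "\<dots> \<le> g z" unfolding g_def
        by (rule member_le_sum) (use k in auto)
      finally show ?thesis .
    qed
    define eta where "eta = g z0 / real (Suc theta)"
    have eta: "eta > 0" using gpos[OF z0(1)] by (simp add: eta_def)
    have ev1: "eventually (\<lambda>n. \<forall>k\<in>{..theta}. \<bar>(\<Sum>i<k. normalize n (lam n) i) - (\<Sum>i<k. x i)\<bar> < eta) sequentially"
    proof (rule eventually_ball_finite, simp, intro ballI)
      fix k
      have "(\<lambda>n. \<Sum>i<k. normalize n (lam n) i) \<longlonglongrightarrow> (\<Sum>i<k. x i)"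
        by (rule psum_tendsto[OF xn])
      then have "eventually (\<lambda>n. dist (\<Sum>i<k. normalize n (lam n) i) (\<Sum>i<k. x i) < eta) sequentially"
        using eta by (simp add: tendsto_iff)
      then show "eventually (\<lambda>n. \<bar>(\<Sum>i<k. normalize n (lam n) i) - (\<Sum>i<k. x i)\<bar> < eta) sequentially"
        by (simp add: dist_real_def)
    qed
    have "eventually (\<lambda>n. n > 0) sequentially" by (simp add: eventually_gt_at_top)
    with ev1 have "eventually (\<lambda>n. n > 0 \<and> (\<forall>k\<in>{..theta}. \<bar>(\<Sum>i<k. normalize n (lam n) i) - (\<Sum>i<k. x i)\<bar> < eta)) sequentially"
      by (simp add: eventually_conj_iff)
    then show ?thesis
    proof (rule eventually_mono, intro allI impI)
      fix n m
      assume H: "n > 0 \<and> (\<forall>k\<in>{..theta}. \<bar>(\<Sum>i<k. normalize n (lam n) i) - (\<Sum>i<k. x i)\<bar> < eta)"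
        and mp: "m \<in> partitions theta n" and md: "dominates theta (\<lambda>i. real (m i)) (\<lambda>i. real (lam n i))"
      define z where "z = normalize n m"
      have zD: "z \<in> simplexD theta" unfolding z_def using H mp by (intro normalize_simplexD) auto
      have zdom: "dominates theta z (normalize n (lam n))" unfolding z_def using H md by (intro dom_normalize) auto
      show "phi z \<le> M + e"
      proof (rule ccontr)
        assume "\<not> phi z \<le> M + e"
        then have zK: "z \<in> K" using zD by (auto simp: K_def)
        have "\<exists>k\<in>{..theta}. max 0 ((\<Sum>i<k. x i) - (\<Sum>i<k. z i)) \<ge> eta"
        proof (rule ccontr)
          assume "\<not> ?thesis"
          then have "g z < (\<Sum>k\<le>theta. eta)" unfolding g_def
            by (intro sum_strict_mono) (auto simp: not_le)
          also have "\<dots> = g z0" by (simp add: eta_def)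
          finally show False using z0(2)[OF zK] by simp
        qed
        then obtain k where k: "k \<le> theta" "(\<Sum>i<k. x i) - (\<Sum>i<k. z i) \<ge> eta"
          using eta by (auto simp: max_def split: if_splits)
        have "\<bar>(\<Sum>i<k. normalize n (lam n) i) - (\<Sum>i<k. x i)\<bar> < eta" using H k by auto
        moreover have "(\<Sum>i<k. normalize n (lam n) i) \<le> (\<Sum>i<k. z i)"
          using zdom k by (auto simp: dominates_def)
        ultimately show False using k by linarith
      qed
    qed
  qed
qed

lemma psum_split:
  fixes g :: "nat \<Rightarrow> 'a::comm_monoid_add"
  assumes "k \<le> theta"
  shows "(\<Sum>i<theta. g i) = (\<Sum>i<k. g i) + (\<Sum>i\<in>{k..<theta}. g i)"
  using sum.atLeastLessThan_concat[of 0 k theta g] assms by (simp add: atLeast0LessThan)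

lemma psum_normalize:
  "(\<Sum>i<k. normalize n l i) = real (\<Sum>i<k. l i) / real n"
  by (simp add: normalize_def sum_divide_distrib)

definition pth :: "real \<Rightarrow> (nat \<Rightarrow> real) \<Rightarrow> nat \<Rightarrow> real" where
  "pth t y = (\<lambda>i. (1 - t) * y i + (if i = 0 then t else 0))"

lemma pth_psum: "(\<Sum>i<k. pth t y i) = (1 - t) * (\<Sum>i<k. y i) + (if 0 < k then t else 0)"
  by (simp add: pth_def sum.distrib sum_distrib_left[symmetric] sum.delta' lessThan_iff)

lemma pth_simplexD:
  assumes "theta \<ge> 2" "y \<in> simplexD theta" "0 \<le> t" "t \<le> 1"
  shows "pth t y \<in> simplexD theta"
proof -
  have y0: "\<forall>i\<ge>theta. y i = 0" and yb: "\<forall>i<theta. 0 \<le> y i \<and> y i \<le> 1"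
    and ym: "\<forall>i j. i \<le> j \<and> j < theta \<longrightarrow> y j \<le> y i" and ys: "(\<Sum>i<theta. y i) = 1"
    using assms(2) by (auto simp: simplexD_def)
  have "(\<Sum>i<theta. pth t y i) = 1" using assms(1) ys by (simp add: pth_psum)
  moreover have "\<forall>i\<ge>theta. pth t y i = 0" using y0 assms(1) by (auto simp: pth_def)
  moreover have "\<forall>i<theta. 0 \<le> pth t y i \<and> pth t y i \<le> 1"
  proof (intro allI impI conjI)
    fix i assume "i < theta"
    then have "0 \<le> y i" "y i \<le> 1" using yb by auto
    then have "0 \<le> (1-t) * y i" "(1-t) * y i \<le> 1 - t" using assms(3,4)
      by (auto intro: mult_nonneg_nonneg mult_left_le)
    then show "0 \<le> pth t y i" "pth t y i \<le> 1" using assms(3,4) by (auto simp: pth_def)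
  qed
  moreover have "\<forall>i j. i \<le> j \<and> j < theta \<longrightarrow> pth t y j \<le> pth t y i"
  proof (intro allI impI)
    fix i j assume "i \<le> j \<and> j < theta"
    then have "y j \<le> y i" using ym by auto
    then have "(1-t) * y j \<le> (1-t) * y i" using assms(4) by (intro mult_left_mono) auto
    then show "pth t y j \<le> pth t y i" using \<open>i \<le> j \<and> j < theta\<close> assms(3) by (auto simp: pth_def)
  qed
  ultimately show ?thesis by (simp add: simplexD_def)
qed

lemma card_partitions:
  "finite (partitions theta n) \<and> card (partitions theta n) \<le> (Suc n) ^ theta"
proof -
  let ?r = "\<lambda>l::nat\<Rightarrow>nat. restrict l {..<theta}"
  have inj: "inj_on ?r (partitions theta n)"
  proof (rule inj_onI)
    fix a b assume a: "a \<in> partitions theta n" and b: "b \<in> partitions theta n" and e: "?r a = ?r b"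
    show "a = b"
    proof
      fix i show "a i = b i"
      proof (cases "i < theta")
        case True then show ?thesis using fun_cong[OF e, of i] by simp
      next
        case False then show ?thesis using a b by (simp add: partitions_def)
      qed
    qed
  qed
  have sub: "?r ` partitions theta n \<subseteq> PiE {..<theta} (\<lambda>_. {..n})"
  proof
    fix f assume "f \<in> ?r ` partitions theta n"
    then obtain l where l: "l \<in> partitions theta n" "f = ?r l" by blast
    have "l i \<le> n" if "i < theta" for i
      using member_le_sum[of i "{..<theta}" l] that l(1) by (auto simp: partitions_def)
    then show "f \<in> PiE {..<theta} (\<lambda>_. {..n})" using l(2) by auto
  qed
  have fin: "finite (PiE {..<theta} (\<lambda>_. {..n}))" by (simp add: finite_PiE)
  have cP: "card (PiE {..<theta} (\<lambda>_. {..n})) = (Suc n) ^ theta" by (simp add: card_PiE)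
  have "finite (?r ` partitions theta n)" using finite_subset[OF sub fin] .
  then have f1: "finite (partitions theta n)" using finite_imageD inj by blast
  have "card (partitions theta n) = card (?r ` partitions theta n)" using card_image[OF inj] by simp
  also have "\<dots> \<le> (Suc n) ^ theta" using card_mono[OF fin sub] cP by simp
  finally show ?thesis using f1 by simp
qed

definition rnd :: "nat \<Rightarrow> (nat \<Rightarrow> real) \<Rightarrow> nat \<Rightarrow> nat \<Rightarrow> nat" where
  "rnd theta y n i = (if i = 0 then n - (\<Sum>j\<in>{1..<theta}. nat \<lfloor>real n * y j\<rfloor>)
     else if i < theta then nat \<lfloor>real n * y i\<rfloor> else 0)"

lemma rnd_props:
  assumes th: "theta \<ge> 2" and yD: "y \<in> simplexD theta"
  shows "rnd theta y n \<in> partitions theta n"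
    and "\<And>k. k \<le> theta \<Longrightarrow> real n * (\<Sum>i<k. y i) \<le> real (\<Sum>i<k. rnd theta y n i)"
    and "\<And>i. \<bar>real (rnd theta y n i) - real n * y i\<bar> \<le> real theta"
proof -
  define f where "f j = nat \<lfloor>real n * y j\<rfloor>" for j
  define s where "s = (\<Sum>j\<in>{1..<theta}. f j)"
  have y0: "\<forall>i\<ge>theta. y i = 0" and yb: "\<forall>i<theta. 0 \<le> y i \<and> y i \<le> 1"
    and ym: "\<forall>i j. i \<le> j \<and> j < theta \<longrightarrow> y j \<le> y i" and ys: "(\<Sum>i<theta. y i) = 1"
    using yD by (auto simp: simplexD_def)
  have fle: "real (f j) \<le> real n * y j" and fgt: "real n * y j - 1 < real (f j)" if "j < theta" for j
  proof -
    have "0 \<le> real n * y j" using yb that by simp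
    then have "real (f j) = of_int \<lfloor>real n * y j\<rfloor>" by (simp add: f_def)
    then show "real (f j) \<le> real n * y j" "real n * y j - 1 < real (f j)" by linarith+
  qed
  have split0: "{..<theta} = insert 0 {1..<theta}" using th by auto
  have ys1: "(\<Sum>j\<in>{1..<theta}. y j) = 1 - y 0" using ys by (simp add: split0)
  have ys1': "sum y {Suc 0..<theta} = 1 - y 0" using ys1 by simp
  have sle: "real s \<le> real n * (1 - y 0)"
  proof -
    have "real s = (\<Sum>j\<in>{1..<theta}. real (f j))" by (simp add: s_def)
    also have "\<dots> \<le> (\<Sum>j\<in>{1..<theta}. real n * y j)" by (intro sum_mono fle) auto
    also have "\<dots> = real n * (1 - y 0)" using ys1 by (simp only: sum_distrib_left[symmetric])
    finally show ?thesis .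
  qed
  have sge: "real n * (1 - y 0) - real s \<le> real theta"
  proof -
    have "real n * (1 - y 0) - real s = (\<Sum>j\<in>{1..<theta}. real n * y j - real (f j))"
      by (simp add: s_def sum_subtractf sum_distrib_left[symmetric] ys1')
    also have "\<dots> \<le> real (card {1..<theta}) * 1"
      by (rule sum_bounded_above) (use fgt in force)
    also have "\<dots> \<le> real theta" by simp
    finally show ?thesis .
  qed
  have sn: "s \<le> n"
  proof -
    have "0 \<le> y 0" using yb th by auto
    then have "real n * (1 - y 0) \<le> real n" by (simp add: mult_left_le)
    then have "real s \<le> real n" using sle by linarith
    then show ?thesis by simp
  qed
  have r0: "real (rnd theta y n 0) = real n - real s" using sn by (simp add: rnd_def s_def f_def)
  have ri: "rnd theta y n i = f i" if "0 < i" "i < theta" for i using that by (simp add: rnd_def f_def)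
  have rz: "rnd theta y n i = 0" if "theta \<le> i" for i using that th by (simp add: rnd_def)
  have fmono: "f j \<le> f i" if "i \<le> j" "j < theta" for i j
  proof -
    have "real n * y j \<le> real n * y i" using ym that by (intro mult_left_mono) auto
    then show ?thesis unfolding f_def by (intro nat_mono floor_mono)
  qed
  have f0: "real (f j) \<le> real (rnd theta y n 0)" if "j < theta" for j
  proof -
    have "real (f j) \<le> real n * y j" using fle that .
    also have "\<dots> \<le> real n * y 0" using ym that by (intro mult_left_mono) auto
    also have "\<dots> \<le> real (rnd theta y n 0)" using r0 sle by (simp add: algebra_simps)
    finally show ?thesis .
  qed
  have total: "(\<Sum>i<theta. rnd theta y n i) = n"
  proof -
    have "(\<Sum>i<theta. rnd theta y n i) = rnd theta y n 0 + (\<Sum>i\<in>{1..<theta}. rnd theta y n i)"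
      by (simp add: split0)
    also have "(\<Sum>i\<in>{1..<theta}. rnd theta y n i) = s" unfolding s_def by (intro sum.cong) (auto simp: ri)
    finally show ?thesis using sn by (simp add: rnd_def s_def f_def)
  qed
  show "rnd theta y n \<in> partitions theta n"
    unfolding partitions_def
  proof (intro CollectI conjI allI impI total)
    fix i assume "theta \<le> i" then show "rnd theta y n i = 0" by (rule rz)
  next
    fix i j assume H: "i \<le> j \<and> j < theta"
    show "rnd theta y n j \<le> rnd theta y n i"
    proof (cases "i = 0")
      case True
      show ?thesis
      proof (cases "j = 0")
        case False then show ?thesis using True H f0[of j] ri[of j] by simp
      qed (use True in simp)
    next
      case False then show ?thesis using H ri fmono by simp
    qed
  qed
  show "real n * (\<Sum>i<k. y i) \<le> real (\<Sum>i<k. rnd theta y n i)" if k: "k \<le> theta" for k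
  proof (cases "k = 0")
    case False
    have tot: "real (\<Sum>i<k. rnd theta y n i) = real n - (\<Sum>i\<in>{k..<theta}. real (f i))"
    proof -
      have "(\<Sum>i\<in>{k..<theta}. rnd theta y n i) = (\<Sum>i\<in>{k..<theta}. f i)"
        using False by (intro sum.cong) (auto simp: ri)
      then have "n = (\<Sum>i<k. rnd theta y n i) + (\<Sum>i\<in>{k..<theta}. f i)"
        using psum_split[OF k, of "rnd theta y n"] total by simp
      then show ?thesis by (metis add_diff_cancel_right' of_nat_add of_nat_sum)
    qed
    have "(\<Sum>i\<in>{k..<theta}. real (f i)) \<le> (\<Sum>i\<in>{k..<theta}. real n * y i)"
      by (intro sum_mono fle) auto
    also have "\<dots> = real n * (1 - (\<Sum>i<k. y i))"
      using psum_split[OF k, of y] ys by (simp add: sum_distrib_left[symmetric])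
    finally show ?thesis using tot by (simp add: algebra_simps)
  qed simp
  show "\<bar>real (rnd theta y n i) - real n * y i\<bar> \<le> real theta" for i
  proof -
    consider "i = 0" | "0 < i" "i < theta" | "theta \<le> i" by linarith
    then show ?thesis
    proof cases
      case 1
      have "0 \<le> real n * (1 - y 0) - real s" using sle by simp
      then show ?thesis using 1 r0 sge by (simp add: algebra_simps)
    next
      case 2
      then show ?thesis using fle[of i] fgt[of i] ri th by simp
    next
      case 3
      then show ?thesis using rz y0 by simp
    qed
  qed
qed

lemma lower_bound:
  fixes phi :: "(nat \<Rightarrow> real) \<Rightarrow> real" and e :: real
  assumes th: "theta \<ge> 2" and cont: "continuous_on (simplexD theta) phi"
    and yD: "y \<in> simplexDom theta x" and xD: "x \<in> simplexD theta"
    and xn: "(\<lambda>n. normalize n (lam n)) \<longlonglongrightarrow> x"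
    and lamP: "\<And>n. n > 0 \<Longrightarrow> lam n \<in> partitions theta n" and e: "e > 0"
  shows "\<exists>mm. eventually (\<lambda>n. mm n \<in> partitions theta n \<and>
     dominates theta (\<lambda>i. real (mm n i)) (\<lambda>i. real (lam n i)) \<and> phi y - e < phi (normalize n (mm n))) sequentially"
proof -
  have ys: "y \<in> simplexD theta" and ydom: "dominates theta y x" using yD by (auto simp: simplexDom_def)
  have pc: "continuous_on {0..1} (\<lambda>t. pth t y)" unfolding pth_def
  proof (intro continuous_on_coordinatewise_then_product)
    fix i show "continuous_on {0..1} (\<lambda>t. (1 - t) * y i + (if i = 0 then t else 0))"
      by (cases "i = 0") (auto intro!: continuous_intros)
  qed
  have "continuous_on {0..1} (\<lambda>t. phi (pth t y))"
    by (rule continuous_on_compose2[OF cont pc]) (auto intro: pth_simplexD[OF th ys])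
  then obtain d where d: "d > 0" "\<And>t. t \<in> {0..1} \<Longrightarrow> dist t 0 < d \<Longrightarrow> dist (phi (pth t y)) (phi (pth 0 y)) < e/2"
    unfolding continuous_on_iff using e by (metis atLeastAtMost_iff half_gt_zero order_refl zero_le_one)
  have p0: "pth 0 y = y" by (simp add: pth_def)
  define t where "t = min (d/2) (1/2)"
  have t: "0 < t" "t < 1" using d by (auto simp: t_def)
  define y' where "y' = pth t y"
  have y'D: "y' \<in> simplexD theta" unfolding y'_def using t by (intro pth_simplexD[OF th ys]) auto
  have py': "phi y - e/2 < phi y'"
  proof -
    have "t < d" using d(1) by (simp add: t_def)
    then have "\<bar>phi (pth t y) - phi y\<bar> < e/2" using d(2)[of t] t p0 by (simp add: dist_real_def)
    then show ?thesis unfolding y'_def by linarith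
  qed
  have ev_dom: "eventually (\<lambda>n. \<forall>k\<in>{..theta}. real (\<Sum>i<k. lam n i) \<le> real n * (\<Sum>i<k. y' i)) sequentially"
  proof (rule eventually_ball_finite, simp, intro ballI)
    fix k assume "k \<in> {..theta}"
    then have k: "k \<le> theta" by simp
    have evn: "eventually (\<lambda>n. n > 0) sequentially" by (simp add: eventually_gt_at_top)
    have Ly: "(\<Sum>i<k. y' i) = (1 - t) * (\<Sum>i<k. y i) + (if 0 < k then t else 0)"
      unfolding y'_def by (rule pth_psum)
    have xy: "(\<Sum>i<k. x i) \<le> (\<Sum>i<k. y i)" using ydom k by (simp add: dominates_def)
    have x1: "(\<Sum>i<k. x i) \<le> 1" using psum_le_1[OF xD k] .
    have y1: "(\<Sum>i<k. y i) \<le> 1" using psum_le_1[OF ys k] .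
    show "eventually (\<lambda>n. real (\<Sum>i<k. lam n i) \<le> real n * (\<Sum>i<k. y' i)) sequentially"
    proof (cases "k = 0")
      case True then show ?thesis by simp
    next
      case False
      show ?thesis
      proof (cases "(\<Sum>i<k. x i) = 1")
        case True
        then have "(\<Sum>i<k. y i) = 1" using xy y1 by simp
        then have "(\<Sum>i<k. y' i) = 1" using Ly False by simp
        then show ?thesis using evn
        proof (elim eventually_mono)
          fix n :: nat assume "(\<Sum>i<k. y' i) = 1" "n > 0"
          have "(\<Sum>i<k. lam n i) \<le> (\<Sum>i<theta. lam n i)" using k by (intro sum_mono2) auto
          also have "\<dots> = n" using lamP[OF \<open>n > 0\<close>] by (simp add: partitions_def)
          finally show "real (\<Sum>i<k. lam n i) \<le> real n * (\<Sum>i<k. y' i)" using \<open>(\<Sum>i<k. y' i) = 1\<close> by (simp del: of_nat_sum add: of_nat_sum[symmetric])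
        qed
      next
        case False2: False
        define c where "c = (\<Sum>i<k. y' i) - (\<Sum>i<k. x i)"
        have "0 < t * (1 - (\<Sum>i<k. x i))" using t x1 False2 by simp
        moreover have "t * (1 - (\<Sum>i<k. x i)) \<le> c"
        proof -
          have "(1 - t) * (\<Sum>i<k. x i) \<le> (1 - t) * (\<Sum>i<k. y i)" using t xy by (intro mult_left_mono) auto
          then show ?thesis using Ly False by (simp add: c_def algebra_simps)
        qed
        ultimately have c: "c > 0" by linarith
        have ev1: "eventually (\<lambda>n. dist (\<Sum>i<k. normalize n (lam n) i) (\<Sum>i<k. x i) < c) sequentially"
          using psum_tendsto[OF xn, of k] c by (simp add: tendsto_iff)
        from ev1 evn show ?thesis
        proof (rule eventually_elim2)
          fix n :: nat assume H: "dist (\<Sum>i<k. normalize n (lam n) i) (\<Sum>i<k. x i) < c" "n > 0"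
          then have "real (\<Sum>i<k. lam n i) / real n < (\<Sum>i<k. y' i)"
            by (simp add: psum_normalize dist_real_def c_def)
          then show "real (\<Sum>i<k. lam n i) \<le> real n * (\<Sum>i<k. y' i)"
            using H(2) by (simp add: divide_less_eq mult.commute)
        qed
      qed
    qed
  qed
  define mm where "mm = rnd theta y'"
  have conv: "(\<lambda>n. normalize n (mm n)) \<longlonglongrightarrow> y'"
    unfolding tendsto_fun_iff
  proof
    fix i
    have "(\<lambda>n. normalize n (mm n) i - y' i) \<longlonglongrightarrow> 0"
    proof (rule Lim_null_comparison)
      show "(\<lambda>n. real theta / real n) \<longlonglongrightarrow> 0" by (rule lim_const_over_n)
      show "eventually (\<lambda>n. norm (normalize n (mm n) i - y' i) \<le> real theta / real n) sequentially"
        using eventually_gt_at_top[of "0::nat"]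
      proof (rule eventually_mono)
        fix n :: nat assume "n > 0"
        have "normalize n (mm n) i - y' i = (real (mm n i) - real n * y' i) / real n"
          using \<open>n > 0\<close> by (simp add: normalize_def field_simps)
        then show "norm (normalize n (mm n) i - y' i) \<le> real theta / real n"
          using rnd_props(3)[OF th y'D, of n i] \<open>n > 0\<close>
          by (simp add: mm_def abs_divide divide_right_mono)
      qed
    qed
    then show "(\<lambda>n. normalize n (mm n) i) \<longlonglongrightarrow> y' i" by (rule LIM_zero_cancel)
  qed
  have "(\<lambda>n. phi (normalize n (mm n))) \<longlonglongrightarrow> phi y'"
  proof (rule continuous_on_tendsto_compose[OF cont conv y'D])
    show "eventually (\<lambda>n. normalize n (mm n) \<in> simplexD theta) sequentially"
      using eventually_gt_at_top[of "0::nat"]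
    proof (rule eventually_mono)
      fix n :: nat assume "n > 0"
      then show "normalize n (mm n) \<in> simplexD theta"
        unfolding mm_def by (intro normalize_simplexD rnd_props(1)[OF th y'D])
    qed
  qed
  then have ev_phi: "eventually (\<lambda>n. phi y' - e/2 < phi (normalize n (mm n))) sequentially"
  proof -
    assume L: "(\<lambda>n. phi (normalize n (mm n))) \<longlonglongrightarrow> phi y'"
    have "eventually (\<lambda>n. dist (phi (normalize n (mm n))) (phi y') < e/2) sequentially"
      using L e unfolding tendsto_iff by (meson half_gt_zero)
    then show ?thesis
    proof (rule eventually_mono)
      fix n assume "dist (phi (normalize n (mm n))) (phi y') < e/2"
      then have "\<bar>phi (normalize n (mm n)) - phi y'\<bar> < e/2" by (simp add: dist_real_def)
      then show "phi y' - e/2 < phi (normalize n (mm n))" by linarith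
    qed
  qed
  have "eventually (\<lambda>n. mm n \<in> partitions theta n \<and>
     dominates theta (\<lambda>i. real (mm n i)) (\<lambda>i. real (lam n i)) \<and> phi y - e < phi (normalize n (mm n))) sequentially"
    using ev_dom ev_phi
  proof (rule eventually_elim2, intro conjI)
    fix n assume D: "\<forall>k\<in>{..theta}. real (\<Sum>i<k. lam n i) \<le> real n * (\<Sum>i<k. y' i)"
      and P: "phi y' - e/2 < phi (normalize n (mm n))"
    show "mm n \<in> partitions theta n" unfolding mm_def by (rule rnd_props(1)[OF th y'D])
    show "dominates theta (\<lambda>i. real (mm n i)) (\<lambda>i. real (lam n i))"
      unfolding dominates_def
    proof (intro allI impI)
      fix k assume k: "k \<le> theta"
      have "real (\<Sum>i<k. lam n i) \<le> real (\<Sum>i<k. mm n i)"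
        using D k rnd_props(2)[OF th y'D k, of n] by (force simp: mm_def)
      then show "(\<Sum>i<k. real (lam n i)) \<le> (\<Sum>i<k. real (mm n i))" by simp
    qed
    show "phi y - e < phi (normalize n (mm n))" using P py' by linarith
  qed
  then show ?thesis by blast
qed

lemma ln_Suc_over_n: "(\<lambda>n. c * (ln (real (Suc n)) / real n)) \<longlonglongrightarrow> 0"
proof -
  have a: "(\<lambda>n. ln (real (Suc n)) / real (Suc n)) \<longlonglongrightarrow> 0"
    using LIMSEQ_Suc[OF lim_ln_over_n] by simp
  have b: "(\<lambda>n. real (Suc n) / real n) \<longlonglongrightarrow> 1"
    using LIMSEQ_Suc_n_over_n by simp
  have "(\<lambda>n. c * ((ln (real (Suc n)) / real (Suc n)) * (real (Suc n) / real n))) \<longlonglongrightarrow> c * (0 * 1)"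
    by (intro tendsto_mult a b tendsto_const)
  then have "(\<lambda>n. c * ((ln (real (Suc n)) / real (Suc n)) * (real (Suc n) / real n))) \<longlonglongrightarrow> 0" by simp
  moreover have "eventually (\<lambda>n. c * ((ln (real (Suc n)) / real (Suc n)) * (real (Suc n) / real n))
      = c * (ln (real (Suc n)) / real n)) sequentially"
    by (rule always_eventually) (simp del: of_nat_Suc)
  ultimately show ?thesis by (rule Lim_transform_eventually)
qed

theorem lemma3p2:
  fixes theta :: nat
    and phi :: "(nat \<Rightarrow> real) \<Rightarrow> real"
    and phin :: "nat \<Rightarrow> (nat \<Rightarrow> nat) \<Rightarrow> (nat \<Rightarrow> nat) \<Rightarrow> real"
    and delta :: "nat \<Rightarrow> real"
    and lam :: "nat \<Rightarrow> (nat \<Rightarrow> nat)"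
    and x :: "nat \<Rightarrow> real"
  assumes "theta \<ge> 2"
    and "continuous_on (simplexD theta) phi"
    and "delta \<longlonglongrightarrow> 0"
    and "\<And>n l m. n > 0 \<Longrightarrow> l \<in> partitions theta n \<Longrightarrow> m \<in> partitions theta n \<Longrightarrow>
           \<bar>phin n l m - phi (normalize n m)\<bar> \<le> delta n"
    and "\<And>n. n > 0 \<Longrightarrow> lam n \<in> partitions theta n"
    and "x \<in> simplexD theta"
    and "(\<lambda>n. normalize n (lam n)) \<longlonglongrightarrow> x"
  shows "\<exists>y\<in>simplexDom theta x. (\<forall>z\<in>simplexDom theta x. phi z \<le> phi y) \<and>
     (\<lambda>n. ln (\<Sum>m\<in>{m \<in> partitions theta n.
                  dominates theta (\<lambda>i. real (m i)) (\<lambda>i. real (lam n i))}.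
               exp (real n * phin n (lam n) m)) / real n) \<longlonglongrightarrow> phi y"
proof -
  note th = assms(1) and cont = assms(2) and dl = assms(3) and approx = assms(4)
    and lamP = assms(5) and xD = assms(6) and xn = assms(7)
  have xin: "x \<in> simplexDom theta x" using xD by (simp add: simplexDom_def dominates_def)
  obtain y where yD: "y \<in> simplexDom theta x" and ymax: "\<forall>z\<in>simplexDom theta x. phi z \<le> phi y"
    using continuous_attains_sup[OF compact_simplexDom, of theta x phi] xin
      continuous_on_subset[OF cont, of "simplexDom theta x"] by (auto simp: simplexDom_def)
  define D where "D n = {m \<in> partitions theta n. dominates theta (\<lambda>i. real (m i)) (\<lambda>i. real (lam n i))}" for n
  define S where "S n = (\<Sum>m\<in>D n. exp (real n * phin n (lam n) m))" for n
  define M where "M = phi y"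
  have finD: "finite (D n)" for n using card_partitions[of theta n] by (simp add: D_def)
  have cardD: "card (D n) \<le> Suc n ^ theta" for n
    using card_partitions[of theta n] card_mono[of "partitions theta n" "D n"] by (auto simp: D_def)
  have "(\<lambda>n. ln (S n) / real n) \<longlonglongrightarrow> M"
    unfolding tendsto_iff
  proof (intro allI impI)
    fix e :: real assume e: "e > 0"
    have ev_up: "eventually (\<lambda>n. \<forall>m. m \<in> partitions theta n \<longrightarrow>
      dominates theta (\<lambda>i. real (m i)) (\<lambda>i. real (lam n i)) \<longrightarrow> phi (normalize n m) \<le> M + e/4) sequentially"
      using upper_bound[OF cont _ xn, of M "e/4"] ymax e by (simp add: M_def)
    obtain mm where ev_lo: "eventually (\<lambda>n. mm n \<in> partitions theta n \<and>
       dominates theta (\<lambda>i. real (mm n i)) (\<lambda>i. real (lam n i)) \<and> M - e/4 < phi (normalize n (mm n))) sequentially"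
      using lower_bound[OF th cont yD xD xn lamP, of "e/4"] e by (auto simp: M_def)
    have ev_d: "eventually (\<lambda>n. \<bar>delta n\<bar> < e/4) sequentially"
    proof -
      have "e/4 > 0" using e by simp
      moreover have "\<forall>\<epsilon>>0. eventually (\<lambda>n. \<bar>delta n - 0\<bar> < \<epsilon>) sequentially"
        using dl unfolding tendsto_iff dist_real_def .
      ultimately have "eventually (\<lambda>n. \<bar>delta n - 0\<bar> < e/4) sequentially" by blast
      then show ?thesis by (simp only: diff_zero)
    qed
    have ev_ln: "eventually (\<lambda>n. \<bar>real theta * (ln (real (Suc n)) / real n)\<bar> < e/4) sequentially"
    proof -
      have "e/4 > 0" using e by simp
      moreover have "\<forall>\<epsilon>>0. eventually (\<lambda>n. \<bar>real theta * (ln (real (Suc n)) / real n) - 0\<bar> < \<epsilon>) sequentially"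
        using ln_Suc_over_n[of "real theta"] unfolding tendsto_iff dist_real_def .
      ultimately have "eventually (\<lambda>n. \<bar>real theta * (ln (real (Suc n)) / real n) - 0\<bar> < e/4) sequentially" by blast
      then show ?thesis by (simp only: diff_zero)
    qed
    have ev_n: "eventually (\<lambda>n. n > 0) sequentially" by (simp add: eventually_gt_at_top)
    have "eventually (\<lambda>n. (\<forall>m. m \<in> partitions theta n \<longrightarrow>
      dominates theta (\<lambda>i. real (m i)) (\<lambda>i. real (lam n i)) \<longrightarrow> phi (normalize n m) \<le> M + e/4) \<and>
      (mm n \<in> partitions theta n \<and>
       dominates theta (\<lambda>i. real (mm n i)) (\<lambda>i. real (lam n i)) \<and> M - e/4 < phi (normalize n (mm n))) \<and>
      \<bar>delta n\<bar> < e/4 \<and> \<bar>real theta * (ln (real (Suc n)) / real n)\<bar> < e/4 \<and> n > 0) sequentially"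
      using ev_up ev_lo ev_d ev_ln ev_n by (simp add: eventually_conj_iff)
    then show "eventually (\<lambda>n. dist (ln (S n) / real n) M < e) sequentially"
    proof (rule eventually_mono)
      fix n
      assume H: "(\<forall>m. m \<in> partitions theta n \<longrightarrow>
        dominates theta (\<lambda>i. real (m i)) (\<lambda>i. real (lam n i)) \<longrightarrow> phi (normalize n m) \<le> M + e/4) \<and>
        (mm n \<in> partitions theta n \<and>
         dominates theta (\<lambda>i. real (mm n i)) (\<lambda>i. real (lam n i)) \<and> M - e/4 < phi (normalize n (mm n))) \<and>
        \<bar>delta n\<bar> < e/4 \<and> \<bar>real theta * (ln (real (Suc n)) / real n)\<bar> < e/4 \<and> n > 0"
      then have n: "n > 0" and dn: "\<bar>delta n\<bar> < e/4"
        and lnb: "\<bar>real theta * (ln (real (Suc n)) / real n)\<bar> < e/4" by auto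
      have mmD: "mm n \<in> D n" using H by (simp add: D_def)
      have mmphi: "M - e/4 < phi (normalize n (mm n))" using H by simp
      have lamD: "lam n \<in> D n" using lamP[OF n] by (simp add: D_def dominates_def)
      define X where "X = real n * (M + e/4 + delta n)"
      have term_le: "exp (real n * phin n (lam n) m) \<le> exp X" if "m \<in> D n" for m
      proof -
        have mP: "m \<in> partitions theta n" and md: "dominates theta (\<lambda>i. real (m i)) (\<lambda>i. real (lam n i))"
          using that by (auto simp: D_def)
        have "phin n (lam n) m \<le> phi (normalize n m) + delta n"
          using approx[OF n lamP[OF n] mP] by linarith
        also have "\<dots> \<le> M + e/4 + delta n" using H mP md by auto
        finally show ?thesis unfolding X_def by (intro exp_le_cancel_iff[THEN iffD2] mult_left_mono) auto
      qed
      have Spos: "S n > 0" unfolding S_def using finD lamD by (intro sum_pos) auto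
      have "S n \<le> real (card (D n)) * exp X" unfolding S_def by (rule sum_bounded_above) (rule term_le)
      also have "\<dots> \<le> real (Suc n ^ theta) * exp X"
        using cardD[of n] by (intro mult_right_mono) (auto simp del: of_nat_power)
      finally have Sle: "S n \<le> real (Suc n) ^ theta * exp X" by simp
      have "ln (S n) \<le> ln (real (Suc n) ^ theta * exp X)" using Spos Sle by simp
      also have "\<dots> = real theta * ln (real (Suc n)) + X"
        by (simp add: ln_mult ln_realpow del: of_nat_Suc)
      finally have "ln (S n) / real n \<le> (real theta * ln (real (Suc n)) + X) / real n"
        by (rule divide_right_mono) simp
      also have "\<dots> = real theta * (ln (real (Suc n)) / real n) + (M + e/4 + delta n)"
        using n by (simp add: X_def add_divide_distrib del: of_nat_Suc)
      finally have up: "ln (S n) / real n \<le> real theta * (ln (real (Suc n)) / real n) + (M + e/4 + delta n)" .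
      have "exp (real n * phin n (lam n) (mm n)) \<le> S n"
        unfolding S_def by (rule member_le_sum[OF mmD]) (auto simp: finD)
      then have "real n * phin n (lam n) (mm n) \<le> ln (S n)"
        using Spos by (metis exp_gt_zero ln_exp ln_le_cancel_iff)
      then have lo1: "phin n (lam n) (mm n) \<le> ln (S n) / real n"
        using n by (simp add: le_divide_eq mult.commute)
      have "phi (normalize n (mm n)) - delta n \<le> phin n (lam n) (mm n)"
        using approx[OF n lamP[OF n]] H by force
      then have lo: "M - e/4 - e/4 < ln (S n) / real n" using lo1 mmphi dn by linarith
      have a1: "real theta * (ln (real (Suc n)) / real n) < e/4" using lnb by (meson abs_less_iff)
      have d1: "delta n < e/4" using dn by (meson abs_less_iff)
      have "ln (S n) / real n - M < e" using up a1 d1 e by linarith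
      moreover have "M - ln (S n) / real n < e" using lo e by linarith
      ultimately have "\<bar>ln (S n) / real n - M\<bar> < e" unfolding abs_less_iff by linarith
      then show "dist (ln (S n) / real n) M < e" by (simp add: dist_real_def)
    qed
  qed
  then show ?thesis using yD ymax by (auto simp: S_def D_def M_def)
qed

end
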